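(* Let $q$ be a power of an odd prime, $c\in\mathbb{F}_q^*$, and $f(X)=c(X^{q+1}-X^2)$ on $\mathbb{F}_{q^2}$. Every cycle of the functional graph of $f$ whose length is greater than $1$ has even length.
   Context: The functional graph of $f$ is the directed graph on $\mathbb{F}_{q^2}$ with edges $x\to f(x)$; a cycle of length $n$ is a set of $n$ distinct elements $\alpha, f(\alpha),\dots,f^{(n-1)}(\alpha)$ with $f^{(n)}(\alpha)=\alpha$. *)

theory Defs
  imports Main "HOL-Computational_Algebra.Primes"
begin

end

theory Submission
  imports Defs "HOL-Number_Theory.Residues"
begin

lemma fin_pow_card:
  fixes x :: "'a::{field,finite}"
  shows "x ^ card (UNIV :: 'a set) = x"
proof (cases "x = 0")
  case False
  have "x * (\<Prod>y\<in>UNIV-{0}. x * y) = x * x ^ (card (UNIV :: 'a set) - 1) * \<Prod>(UNIV-{0})"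
    by (simp add: prod.distrib mult_ac)
  also have "x * x ^ (card (UNIV :: 'a set) - 1) = x ^ Suc (card (UNIV :: 'a set) - 1)"
    by (subst power_Suc) auto
  also have "Suc (card (UNIV :: 'a set) - 1) = card (UNIV :: 'a set)"
    using finite_UNIV_card_ge_0[where ?'a = 'a] by simp
  also have "(\<Prod>y\<in>UNIV-{0}. x * y) = (\<Prod>y\<in>UNIV-{0}. y)"
    by (rule prod.reindex_bij_witness[of _ "\<lambda>y. y / x" "\<lambda>y. x * y"]) (use False in auto)
  finally show ?thesis
    by simp
qed (use finite_UNIV_card_ge_0[where ?'a = 'a] in auto)

lemma char_eq:
  assumes "prime p" "k \<ge> 1" "card (UNIV :: 'a::{field,finite} set) = (p^k)^2"
  shows "CHAR('a) = p"
proof -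
  have pr: "prime CHAR('a)"
    using prime_CHAR_semidom finite_imp_CHAR_pos[of] by (metis finite_UNIV)
  have "CHAR('a) dvd p ^ (k*2)" using CHAR_dvd_CARD[where 'a='a] assms(3)
    by (simp add: power_mult)
  then have "CHAR('a) dvd p" using pr prime_dvd_power by blast
  then show ?thesis using pr assms(1) primes_dvd_imp_eq by blast
qed

theorem lemma8:
  fixes c \<alpha> :: "'a::{field,finite}" and p k q n :: nat and f :: "'a \<Rightarrow> 'a"
  assumes "prime p" and "odd p" and "k \<ge> 1" and "q = p ^ k"
    and "card (UNIV :: 'a set) = q ^ 2"
    and "c \<noteq> 0" and "c ^ q = c"
    and "f = (\<lambda>x. c * (x ^ (q + 1) - x ^ 2))"
    and "n > 1"
    and "\<forall>i<n. \<forall>j<n. i \<noteq> j \<longrightarrow> (f ^^ i) \<alpha> \<noteq> (f ^^ j) \<alpha>"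
    and "(f ^^ n) \<alpha> = \<alpha>"
  shows "even n"
proof (rule ccontr)
  assume nodd: "odd n"
  have ch: "CHAR('a) = p" using char_eq assms(1,3,4,5) by blast
  have addq: "(x + y) ^ q = x ^ q + y ^ q" for x y :: 'a
    using freshmans_dream'[of q k x y] ch assms(1,4) by simp
  have oddq: "odd q" using assms(2,4) by simp
  have negq: "(- x) ^ q = - (x ^ q)" for x :: 'a
    using oddq by (simp add: power_minus_odd)
  have subq: "(x - y) ^ q = x ^ q - y ^ q" for x y :: 'a
    using addq[of x "-y"] negq[of y] by simp
  have qq: "(x ^ q) ^ q = x" for x :: 'a
    using fin_pow_card[of x] assms(5) by (simp add: power_mult power2_eq_square)
  have two: "(2::'a) \<noteq> 0"
  proof
    assume "(2::'a) = 0"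
    then have "CHAR('a) dvd 2" using of_nat_eq_0_iff_char_dvd[of 2, where 'a='a] by simp
    then have "p dvd 2" using ch by simp
    then show False using assms(1,2) using dvd_imp_le[of p 2] prime_ge_2_nat[of p] by (cases "p = 2") auto
  qed
  define s where "s x = x + x ^ q" for x :: 'a
  define d where "d x = x - x ^ q" for x :: 'a
  have sf: "s (f x) = - c * (d x)^2" and df: "d (f x) = - c * d x * s x" for x
  proof -
    define b where "b = x ^ q"
    have e1: "(x ^ (q + 1)) ^ q = x * b"
      unfolding b_def by (simp add: power_add qq power_mult_distrib)
    have e2: "(x ^ 2) ^ q = b ^ 2"
      unfolding b_def by (metis power_mult mult.commute)
    have fb: "(f x) ^ q = c * (x * b - b^2)"
    proof -
      have "(f x) ^ q = c ^ q * (x ^ (q + 1) - x ^ 2) ^ q"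
        unfolding assms(8) by (rule power_mult_distrib)
      also have "\<dots> = c * ((x ^ (q + 1)) ^ q - (x ^ 2) ^ q)"
        by (simp only: assms(7) subq)
      finally show ?thesis by (simp only: e1 e2)
    qed
    have fx: "f x = c * (x * b - x^2)" unfolding assms(8) b_def by (simp add: algebra_simps)
    show "s (f x) = - c * (d x)^2" unfolding s_def d_def unfolding fb unfolding fx b_def[symmetric]
      by (simp add: algebra_simps power2_eq_square)
    show "d (f x) = - c * d x * s x" unfolding s_def d_def unfolding fb unfolding fx b_def[symmetric]
      by (simp add: algebra_simps power2_eq_square)
  qed
  define x where "x i = (f ^^ i) \<alpha>" for i
  have xs: "x (Suc i) = f (x i)" for i unfolding x_def by simp
  have per: "x (n * t) = \<alpha>" for t
    by (induction t) (auto simp: x_def funpow_add assms(11))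
  have xmod: "x m = x (m mod n)" for m
  proof -
    have "m = m mod n + n * (m div n)" by simp
    then have "x m = (f ^^ (m mod n)) ((f ^^ (n * (m div n))) \<alpha>)"
      unfolding x_def by (metis funpow_add o_apply)
    then show ?thesis using per unfolding x_def by simp
  qed
  have f0: "f 0 = 0" unfolding assms(8) using oddq by (simp add: power_0_left)
  have xnz: "x i \<noteq> 0" for i
  proof
    assume "x i = 0"
    then have "x (Suc i) = x i" using xs f0 by simp
    then have "x (Suc i mod n) = x (i mod n)" using xmod by metis
    moreover have "Suc i mod n \<noteq> i mod n" using assms(9)
      by (auto simp add: mod_Suc)
    ultimately show False using assms(9,10) unfolding x_def by simp
  qed
  have dnz: "d (x i) \<noteq> 0" for i
  proof
    assume h: "d (x i) = 0"
    then have "s (x (Suc i)) = 0" "d (x (Suc i)) = 0" using xs sf df by auto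
    then have "2 * x (Suc i) = 0" unfolding s_def d_def by (simp add: algebra_simps)
    then show False using two xnz by simp
  qed
  define r where "r i = s (x i) / d (x i)" for i
  have rr: "r (Suc i) * r i = 1" for i
    using dnz[of i] dnz[of "Suc i"] assms(6) unfolding r_def xs
    by (simp add: sf df field_simps power2_eq_square)
  have r2: "r (Suc (Suc i)) = r i" for i
    using rr[of i] rr[of "Suc i"] by (metis mult.commute mult_cancel_left nonzero_mult_div_cancel_left one_neq_zero mult_zero_left)
  have reven: "r (2 * m) = r 0" for m by (induction m) (auto simp: r2)
  have rodd: "r (Suc (2 * m)) = r 1" for m by (induction m) (auto simp: r2)
  define m where "m = n div 2"
  have nm: "n = Suc (2 * m)" using nodd unfolding m_def by presburger
  have "x n = x 0" using assms(11) unfolding x_def by simp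
  then have "r n = r 0" unfolding r_def by simp
  then have "r 1 = r 0" using rodd[of m] nm by simp
  then have "r 0 * r 0 = 1" using rr[of 0] by simp
  then have "s \<alpha> * s \<alpha> = d \<alpha> * d \<alpha>" using dnz[of 0] unfolding r_def x_def
    by (simp add: field_simps)
  then have "(s \<alpha> - d \<alpha>) * (s \<alpha> + d \<alpha>) = 0" by (simp add: algebra_simps)
  moreover have "s \<alpha> - d \<alpha> = 2 * \<alpha> ^ q" "s \<alpha> + d \<alpha> = 2 * \<alpha>"
    unfolding s_def d_def by simp_all
  ultimately have "(2 * \<alpha> ^ q) * (2 * \<alpha>) = 0" by simp
  then have "2 * \<alpha> ^ q = 0 \<or> 2 * \<alpha> = 0" by (simp only: mult_eq_0_iff)
  then have "\<alpha> ^ q = 0 \<or> \<alpha> = 0" using two by (simp only: mult_eq_0_iff simp_thms)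
  then have "\<alpha> = 0" by auto
  then show False using xnz[of 0] unfolding x_def by simp
qed

end
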